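(* Fix an integer $n\ge 3$ and $p\in(0,1)$, and define for $x\in[2,n-1]$ \[ \varphi(x)=\Bigl(\Bigl(\tfrac{n}{n-1}\Bigr)^p-1\Bigr)^{1/(1-p)}(n-x)+\Bigl(\Bigl(\tfrac{n}{n-1}\Bigr)^p(x-1)-x+2\Bigr)^{1/(1-p)}(n-x+2)^{-p/(1-p)}. \] Then $\varphi$ is convex on $[2,n-1]$ and $\varphi(x)\le 1$ for all $x\in[2,n-1]$. *)

theory Defs
  imports "HOL-Analysis.Analysis"
begin

definition phi :: "nat \<Rightarrow> real \<Rightarrow> real \<Rightarrow> real" where
  "phi n p x =
     ((real n / (real n - 1)) powr p - 1) powr (1 / (1 - p)) * (real n - x)
   + ((real n / (real n - 1)) powr p * (x - 1) - x + 2) powr (1 / (1 - p))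
     * (real n - x + 2) powr (- p / (1 - p))"

end

theory Submission
  imports Defs
begin

lemma bern_powr:
  fixes x p :: real
  assumes "0 \<le> p" "p \<le> 1" "0 \<le> x"
  shows "(1 + x) powr p \<le> 1 + p * x"
proof -
  have "exp ((1 - p) * 0 + p * ln (1 + x)) \<le> (1 - p) * exp 0 + p * exp (ln (1 + x))"
    using convex_onD[OF exp_convex, of p 0 "ln (1+x)"] assms by simp
  then show ?thesis using assms by (simp add: powr_def algebra_simps)
qed

lemma superadd_powr:
  fixes a b q :: real
  assumes "1 \<le> q" "0 \<le> a" "0 \<le> b"
  shows "a powr q + b powr q \<le> (a + b) powr q"
proof (cases "a + b = 0")
  case True
  then have "a = 0" "b = 0" using assms by auto
  then show ?thesis by simp
next
  case False
  define s where "s = a + b"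
  have s: "s > 0" using False assms s_def by simp
  have "(a / s) powr q \<le> a / s"
  proof (cases "a = 0")
    case False
    then show ?thesis using powr_le_one_le[of "a/s" q] assms s s_def by auto
  qed simp
  moreover have "(b / s) powr q \<le> b / s"
  proof (cases "b = 0")
    case False
    then show ?thesis using powr_le_one_le[of "b/s" q] assms s s_def by auto
  qed simp
  moreover have "a / s + b / s = 1" using s s_def by (simp add: add_divide_distrib[symmetric])
  ultimately have "(a / s) powr q + (b / s) powr q \<le> 1" by linarith
  then have "s powr q * ((a / s) powr q + (b / s) powr q) \<le> s powr q"
    using s by (simp add: mult_left_le)
  moreover have "s powr q * (a / s) powr q = a powr q" "s powr q * (b / s) powr q = b powr q"
    using s assms by (simp_all add: powr_divide)
  ultimately show ?thesis using s_def by (simp add: distrib_left)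
qed

lemma persp_convex:
  fixes q t u1 u2 b1 b2 :: real
  assumes "1 \<le> q" "0 \<le> t" "t \<le> 1" "0 < u1" "0 < u2" "0 < b1" "0 < b2"
  shows "((1-t)*u1 + t*u2) powr q * ((1-t)*b1 + t*b2) powr (1-q)
     \<le> (1-t) * (u1 powr q * b1 powr (1-q)) + t * (u2 powr q * b2 powr (1-q))"
proof -
  define V where "V = (1-t)*b1 + t*b2"
  have V: "V > 0" unfolding V_def using assms
    by (cases "t = 0") (auto intro: add_nonneg_pos add_pos_nonneg)
  have U: "0 < (1-t)*u1 + t*u2" using assms
    by (cases "t = 1") (auto intro!: add_pos_nonneg)
  define mu where "mu = t * b2 / V"
  have eq1: "1 - mu = (1-t) * b1 / V" using V unfolding mu_def V_def by (simp add: field_simps)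
  have "0 \<le> (1-t) * b1" "0 \<le> t * b2" using assms by auto
  then have mu0: "0 \<le> mu" "mu \<le> 1" using V unfolding mu_def V_def
    by (auto simp: field_simps)
  have y: "((1-t)*u1 + t*u2)/V = (1-mu) *\<^sub>R (u1 / b1) + mu *\<^sub>R (u2 / b2)"
    using V assms unfolding eq1 by (simp add: mu_def field_simps)
  have conv: "(((1-t)*u1 + t*u2)/V) powr q \<le> (1-mu) * (u1 / b1) powr q + mu * (u2 / b2) powr q"
    unfolding y using convex_onD[OF powr_convex[OF assms(1)], of mu "u1 / b1" "u2 / b2"] mu0 assms
    by simp
  have gen: "\<And>u v. u > 0 \<Longrightarrow> v > 0 \<Longrightarrow> u powr q * v powr (1-q) = v * (u/v) powr q"
    by (simp add: powr_divide powr_diff field_simps)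
  have "((1-t)*u1 + t*u2) powr q * ((1-t)*b1 + t*b2) powr (1-q)
      = V * (((1-t)*u1 + t*u2)/V) powr q"
    using gen[of "(1-t)*u1 + t*u2" V] V U unfolding V_def by simp
  also have "\<dots> \<le> V * ((1-mu) * (u1 / b1) powr q + mu * (u2 / b2) powr q)"
    using conv V by (simp add: mult_left_mono)
  also have "\<dots> = (1-t) * (b1 * (u1 / b1) powr q) + t * (b2 * (u2 / b2) powr q)"
  proof -
    have "V*(1-mu) = (1-t)*b1" using V by (simp add: eq1)
    moreover have "V*mu = t*b2" using V by (simp add: mu_def)
    moreover have "V * ((1-mu) * (u1 / b1) powr q + mu * (u2 / b2) powr q)
       = (V*(1-mu)) * (u1 / b1) powr q + (V*mu) * (u2 / b2) powr q" by (simp add: algebra_simps)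
    ultimately show ?thesis by simp
  qed
  also have "\<dots> = (1-t) * (u1 powr q * b1 powr (1-q)) + t * (u2 powr q * b2 powr (1-q))"
    using gen assms by simp
  finally show ?thesis .
qed

theorem mainTheorem7:
  fixes n :: nat and p :: real
  assumes "n \<ge> 3" and "0 < p" and "p < 1"
  shows "convex_on {2..real n - 1} (phi n p)
       \<and> (\<forall>x\<in>{2..real n - 1}. phi n p x \<le> 1)"
proof -
  define N where "N = real n"
  define m where "m = N - 1"
  define a where "a = (N / m) powr p"
  define c where "c = a - 1"
  define q where "q = 1 / (1 - p)"
  have m2: "m \<ge> 2" using assms(1) unfolding m_def N_def by simp
  have q1: "q \<ge> 1" using assms unfolding q_def by simp
  have pq: "p * q = q - 1" using assms unfolding q_def by (simp add: field_simps)
  have mq: "1 - q = - p / (1 - p)" using assms unfolding q_def by (simp add: field_simps)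
  have qp: "q - 1 \<ge> p" using assms unfolding q_def
    by (simp add: field_simps)
  have Nm: "N / m = 1 + 1 / m" using m2 unfolding m_def by (simp add: field_simps)
  have a1: "a > 1"
  proof -
    have "1 powr p < (N/m) powr p" using Nm m2 assms
      by (intro powr_less_mono2) auto
    then show ?thesis unfolding a_def by simp
  qed
  have c0: "c > 0" using a1 c_def by simp
  have cle: "c \<le> p / m"
  proof -
    have "a \<le> 1 + p * (1/m)" unfolding a_def Nm using bern_powr[of p "1/m"] assms m2 by simp
    then show ?thesis unfolding c_def by simp
  qed
  have phi_eq: "\<And>x. phi n p x = c powr q * (N - x) + (c*(x-1)+1) powr q * (N - x + 2) powr (1-q)"
    unfolding phi_def N_def[symmetric] m_def[symmetric] a_def[symmetric] c_def q_def[symmetric] mq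
    by (simp add: algebra_simps)
  have conv: "convex_on {2..m} (phi n p)"
  proof (rule convex_onI)
    fix t x y :: real assume t: "0 < t" "t < 1" and xy: "x \<in> {2..m}" "y \<in> {2..m}"
    have ux: "0 < c*(x-1)+1" "0 < c*(y-1)+1" using xy c0
      by (auto intro!: add_nonneg_pos)
    have vx: "0 < N - x + 2" "0 < N - y + 2" using xy unfolding m_def by auto
    have e1: "c*(((1-t)*\<^sub>R x + t*\<^sub>R y)-1)+1 = (1-t)*(c*(x-1)+1) + t*(c*(y-1)+1)"
      by (simp add: algebra_simps)
    have e2: "N - ((1-t)*\<^sub>R x + t*\<^sub>R y) + 2 = (1-t)*(N - x + 2) + t*(N - y + 2)"
      by (simp add: algebra_simps)
    have e3: "c powr q * (N - ((1-t)*\<^sub>R x + t*\<^sub>R y)) = (1-t) * (c powr q * (N - x)) + t * (c powr q * (N - y))"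
      by (simp add: algebra_simps)
    have P: "((1-t)*(c*(x-1)+1) + t*(c*(y-1)+1)) powr q * ((1-t)*(N - x + 2) + t*(N - y + 2)) powr (1-q)
      \<le> (1-t) * ((c*(x-1)+1) powr q * (N - x + 2) powr (1-q)) + t * ((c*(y-1)+1) powr q * (N - y + 2) powr (1-q))"
      using persp_convex[OF q1, of t] t ux vx by simp
    show "phi n p ((1 - t) *\<^sub>R x + t *\<^sub>R y) \<le> (1 - t) * phi n p x + t * phi n p y"
      unfolding phi_eq e1 e2 e3 using P by (simp add: algebra_simps)
  next
    show "convex {2..m}" by simp
  qed
  have m0: "m > 0" using m2 by simp
  have cq: "c powr q \<le> (p / m) * m powr (1 - q)"
  proof -
    have "c powr q \<le> (p / m) powr q" using c0 cle q1 by (intro powr_mono2) auto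
    also have "(p / m) powr q = (p / m) * (p powr (q - 1) / m powr (q - 1))"
    proof -
      have "(p / m) powr q = (p / m) powr (1 + (q - 1))" by simp
      also have "\<dots> = (p / m) * (p / m) powr (q - 1)" unfolding powr_add using assms m0 by simp
      finally show ?thesis using assms m0 by (simp add: powr_divide)
    qed
    also have "\<dots> \<le> (p / m) * (1 / m powr (q - 1))"
      using assms m0 q1 by (intro mult_left_mono divide_right_mono powr_le1) auto
    also have "1 / m powr (q - 1) = m powr (1 - q)"
      using m0 by (simp add: powr_minus_divide[symmetric])
    finally show ?thesis .
  qed
  have phi2: "phi n p 2 \<le> 1"
  proof -
    have aq: "a powr q * N powr (1 - q) = m powr (1 - q)"
    proof -
      have h1: "a powr q = N powr (q - 1) / m powr (q - 1)"
        unfolding a_def powr_powr pq using m0 by (simp add: powr_divide)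
      have h2: "N powr (1 - q) * N powr (q - 1) = 1"
        using m0 unfolding m_def by (simp add: powr_add[symmetric])
      have h3: "m powr (1 - q) * m powr (q - 1) = 1"
        using m0 by (simp add: powr_add[symmetric])
      have M: "m powr (q - 1) \<noteq> 0" using m0 by simp
      have "a powr q * N powr (1 - q) = (N powr (1 - q) * N powr (q - 1)) / m powr (q - 1)"
        unfolding h1 by (simp add: ac_simps)
      also have "\<dots> = (m powr (1 - q) * m powr (q - 1)) / m powr (q - 1)" unfolding h2 h3 ..
      also have "\<dots> = m powr (1 - q)" using M by simp
      finally show ?thesis .
    qed
    have p2: "phi n p 2 = c powr q * (m - 1) + m powr (1 - q)"
      unfolding phi_eq using aq unfolding c_def m_def by simp
    have L: "1 + p * ((m - 1) / m) \<le> m powr (q - 1)"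
    proof -
      have "ln (1 / m) \<le> 1 / m - 1" using m0 by (intro ln_le_minus_one) simp
      then have "ln m \<ge> (m - 1) / m" using m0 by (simp add: ln_div field_simps)
      then have "1 + p * ((m - 1) / m) \<le> 1 + p * ln m" using assms
        by (intro add_left_mono mult_left_mono) auto
      also have "\<dots> \<le> exp (p * ln m)" by (rule exp_ge_add_one_self)
      also have "\<dots> = m powr p" using m0 by (simp add: powr_def)
      also have "\<dots> \<le> m powr (q - 1)" using qp m2 by (intro powr_mono) auto
      finally show ?thesis .
    qed
    have "phi n p 2 \<le> (p / m) * m powr (1 - q) * (m - 1) + m powr (1 - q)"
      unfolding p2 using cq m2 by (intro add_mono mult_right_mono) auto
    also have "\<dots> = m powr (1 - q) * (1 + p * ((m - 1) / m))" by (simp add: algebra_simps)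
    also have "\<dots> \<le> m powr (1 - q) * m powr (q - 1)"
      using L by (intro mult_left_mono) auto
    also have "\<dots> = 1" using m0 by (simp add: powr_add[symmetric])
    finally show ?thesis .
  qed
  have phim: "phi n p m \<le> 1" if m3: "m \<ge> 3"
  proof -
    define W where "W = (3::real) powr p"
    define B where "B = c * (m - 1) + 1"
    have B0: "B > 0" unfolding B_def using c0 m2 by (intro add_nonneg_pos) auto
    have W1: "W \<ge> 1" unfolding W_def using assms by (intro ge_one_powr_ge_zero) auto
    have pm: "phi n p m = c powr q + (B / W) powr q"
    proof -
      have "N - m = 1" "N - m + 2 = 3" unfolding m_def by simp_all
      moreover have i3: "(3::real) powr (1 - q) = inverse (3 powr (q - 1))"
        using powr_minus[of "3::real" "q - 1"] by simp
      moreover have "(B / W) powr q = B powr q * 3 powr (1 - q)"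
        unfolding i3 W_def powr_divide powr_powr using B0 pq
        by (simp add: powr_minus_divide[symmetric] divide_inverse powr_minus)
      ultimately show ?thesis unfolding phi_eq B_def by simp
    qed
    have ln3: "ln (3::real) \<ge> 1"
    proof -
      have "ln (exp 1) \<le> ln (3::real)" using exp_le by (subst ln_le_cancel_iff) auto
      then show ?thesis by simp
    qed
    have Wexp: "W \<ge> 1 + p + p^2 / 2"
    proof -
      have "1 + p + p^2 / 2 \<le> exp p" using assms by (intro exp_lower_Taylor_quadratic) simp
      also have "\<dots> \<le> exp (p * ln 3)" using ln3 assms by (simp add: mult_le_cancel_left1)
      also have "\<dots> = W" unfolding W_def by (simp add: powr_def)
      finally show ?thesis .
    qed
    have key: "p + p * (W - 1) / 3 \<le> W - 1"
    proof -
      have "(p + p^2 / 2) * (1 - p / 3) \<le> (W - 1) * (1 - p / 3)"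
        using Wexp assms by (intro mult_right_mono) auto
      moreover have "(p + p^2 / 2) * (1 - p / 3) - p = p^2 * (1 - p) / 6"
        by (simp add: power2_eq_square field_simps)
      moreover have "p^2 * (1 - p) / 6 \<ge> 0" using assms by simp
      moreover have "(W - 1) * (1 - p / 3) = W - 1 - p * (W - 1) / 3" by (simp add: algebra_simps)
      ultimately show ?thesis by linarith
    qed
    have cW: "c * (W + m - 1) \<le> W - 1"
    proof -
      have "c * (W + m - 1) \<le> (p / m) * (W + m - 1)"
        using cle W1 m2 by (intro mult_right_mono) auto
      also have "\<dots> = p + p * (W - 1) / m" using m0 by (simp add: field_simps)
      also have "p * (W - 1) / m \<le> p * (W - 1) / 3"
        using m3 assms W1 by (intro divide_left_mono) auto
      finally show ?thesis using key by linarith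
    qed
    have sum1: "c + B / W \<le> 1"
    proof -
      have "c * W + B \<le> W" using cW unfolding B_def by (simp add: algebra_simps)
      then have "(c * W + B) / W \<le> 1" using W1 by simp
      moreover have "(c * W + B) / W = c + B / W" using W1 by (simp add: field_simps)
      ultimately show ?thesis by simp
    qed
    have "phi n p m \<le> (c + B / W) powr q"
      unfolding pm using superadd_powr[OF q1, of c "B / W"] c0 B0 W1 by simp
    also have "\<dots> \<le> 1" using sum1 c0 B0 W1 q1 by (intro powr_le1) auto
    finally show ?thesis .
  qed
  have bound: "\<forall>x\<in>{2..m}. phi n p x \<le> 1"
  proof
    fix x assume x: "x \<in> {2..m}"
    show "phi n p x \<le> 1"
    proof (cases "m \<ge> 3")
      case False
      then have "m = 2" using m2 unfolding m_def N_def using assms(1) by auto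
      then have "x = 2" using x by auto
      then show ?thesis using phi2 by simp
    next
      case True
      define t where "t = (x - 2) / (m - 2)"
      have t: "0 \<le> t" "t \<le> 1" using x True unfolding t_def by auto
      have "t * (m - 2) = x - 2" using True unfolding t_def by simp
      then have xt: "x = (1 - t) *\<^sub>R 2 + t *\<^sub>R m" by (simp add: algebra_simps)
      have "phi n p x \<le> (1 - t) * phi n p 2 + t * phi n p m"
        unfolding xt using convex_onD[OF conv t, of 2 m] True by simp
      also have "\<dots> \<le> (1 - t) * 1 + t * 1"
        using phi2 phim[OF True] t by (intro add_mono mult_left_mono) auto
      finally show ?thesis by simp
    qed
  qed
  show ?thesis using conv bound unfolding m_def N_def by simp
qed

end
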